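(* Let $\lambda$ and $g$ be as in the context, let $q(-1)=-1$ and let $q(0)$ be the fixed point of $g$ with negative multiplier. Then $g'(q(-1))=\left[g'(q(0))\right]^{2}$.
   Context: There is a unique constant $\lambda=2.5029\ldots$ and a unique infinitely (period-doubling) renormalizable analytic unimodal map $g:[-1,1]\to[-1,1]$ solving $g(x)=-\lambda\, g^{2}(-x/\lambda)$ for $-1\le x\le1$ ($g^2=g\circ g$). Unimodal means: $-1$ is the unique fixed point with positive multiplier, $g(1)=-1$, and $g$ has a unique maximum at an interior nondegenerate critical point $c^{(0)}$. Moreover $g$ is analytic near $[-1,1]$, even, concave on $[-c^{(1)},c^{(1)}]$ where $c^{(1)}=g(c^{(0)})$, satisfies $g(c^{(1)})=-c^{(1)}/\lambda$, $g'(c^{(1)})=-\lambda$, and has negative Schwarzian derivative. *)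

theory Defs
  imports "HOL-Analysis.Analysis"
begin

definition real_analytic_near :: "real set \<Rightarrow> (real \<Rightarrow> real) \<Rightarrow> bool" where
  "real_analytic_near S g \<longleftrightarrow>
     (\<exists>G U. open U \<and> complex_of_real ` S \<subseteq> U \<and> G holomorphic_on U \<and>
        (\<forall>x. complex_of_real x \<in> U \<longrightarrow> G (complex_of_real x) = complex_of_real (g x)))"

definition schwarzian :: "(real \<Rightarrow> real) \<Rightarrow> real \<Rightarrow> real" where
  "schwarzian g x = (deriv ^^ 3) g x / deriv g x
                    - 3 / 2 * ((deriv ^^ 2) g x / deriv g x)^2"

end

theory Submission
  imports Defs "HOL-Complex_Analysis.Complex_Analysis"
begin


lemma analytic_smooth:
  assumes "real_analytic_near S g"
  obtains V where "open V" "S \<subseteq> V"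
    "\<And>n x. x \<in> V \<Longrightarrow> ((deriv^^n) g has_real_derivative (deriv^^(Suc n)) g x) (at x)"
proof -
  obtain G U where U: "open U" "complex_of_real ` S \<subseteq> U" "G holomorphic_on U"
    and GU: "\<And>x. complex_of_real x \<in> U \<Longrightarrow> G (complex_of_real x) = complex_of_real (g x)"
    using assms unfolding real_analytic_near_def by blast
  define V where "V = complex_of_real -` U"
  have oV: "open V" unfolding V_def
    by (intro open_vimage U continuous_intros)
  have SV: "S \<subseteq> V" using U(2) unfolding V_def by auto
  have D: "((\<lambda>y. Re ((deriv^^n) G (complex_of_real y))) has_real_derivative
              Re ((deriv^^Suc n) G (complex_of_real x))) (at x)" if "x \<in> V" for n x
  proof -
    have "((deriv^^n) G has_field_derivative deriv ((deriv^^n) G) (complex_of_real x)) (at (complex_of_real x))"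
      using that U by (intro holomorphic_derivI[OF holomorphic_higher_deriv]) (auto simp: V_def)
    hence "((\<lambda>y. (deriv^^n) G (complex_of_real y)) has_vector_derivative deriv ((deriv^^n) G) (complex_of_real x)) (at x)"
      by (rule has_vector_derivative_real_field)
    hence "((\<lambda>y. Re ((deriv^^n) G (complex_of_real y))) has_real_derivative Re (deriv ((deriv^^n) G) (complex_of_real x))) (at x)"
      by (rule has_field_derivative_Re)
    thus ?thesis by simp
  qed
  have P: "\<forall>x\<in>V. (deriv^^n) g x = Re ((deriv^^n) G (complex_of_real x))" for n
  proof (induction n)
    case 0
    then show ?case using GU by (simp add: V_def)
  next
    case (Suc n)
    show ?case
    proof
      fix x assume x: "x \<in> V"
      have "((deriv^^n) g has_real_derivative Re ((deriv^^Suc n) G (complex_of_real x))) (at x)"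
        by (rule has_field_derivative_transform_within_open[OF D[OF x] oV x]) (use Suc in auto)
      hence "deriv ((deriv^^n) g) x = Re ((deriv^^Suc n) G (complex_of_real x))"
        by (rule DERIV_imp_deriv)
      thus "(deriv^^Suc n) g x = Re ((deriv^^Suc n) G (complex_of_real x))" by simp
    qed
  qed
  show ?thesis
  proof (rule that[OF oV SV])
    fix n x assume x: "x \<in> V"
    have "((deriv^^n) g has_real_derivative Re ((deriv^^Suc n) G (complex_of_real x))) (at x)"
      by (rule has_field_derivative_transform_within_open[OF D[OF x] oV x]) (use P in auto)
    thus "((deriv^^n) g has_real_derivative (deriv^^(Suc n)) g x) (at x)"
      using P[of "Suc n"] x by simp
  qed
qed



lemma crossing:
  fixes h h' :: "real \<Rightarrow> real"
  assumes pr: "p < r" and hp: "h p = 0" and hr: "h r > 0"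
    and der: "\<And>x. x \<in> {p..r} \<Longrightarrow> (h has_real_derivative h' x) (at x)"
    and hp': "h' p < 0"
  shows "\<exists>z. p < z \<and> z < r \<and> h z = 0 \<and> h' z \<ge> 0"
proof -
  have cont: "continuous_on {p..r} h"
    using der by (meson DERIV_continuous continuous_at_imp_continuous_on)
  define S where "S = {p..r} \<inter> h -` {..0}"
  have cS: "closed S" unfolding S_def
    by (rule continuous_closed_preimage[OF cont]) auto
  have pS: "p \<in> S" using pr hp by (auto simp: S_def)
  have bS: "bdd_above S" by (auto simp: S_def bdd_above_def)
  define z where "z = Sup S"
  have zS: "z \<in> S" unfolding z_def using closed_contains_Sup[OF _ bS cS] pS by auto
  have ub: "x \<le> z" if "x \<in> S" for x unfolding z_def using cSup_upper[OF that bS] .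
  have hz: "h z \<le> 0" "p \<le> z" "z \<le> r" using zS by (auto simp: S_def)
  have zr: "z < r" using hz hr by (cases "z = r") auto
  have pos: "h x > 0" if "z < x" "x \<le> r" for x
  proof (rule ccontr)
    assume "\<not> h x > 0"
    hence "x \<in> S" using that hz by (auto simp: S_def)
    thus False using ub[of x] that by auto
  qed
  have hz0: "h z = 0"
  proof (rule ccontr)
    assume "h z \<noteq> 0"
    hence "h z < 0" using hz by auto
    have "continuous_on {z..r} h" using cont hz by (auto intro: continuous_on_subset)
    then obtain w where w: "z \<le> w" "w \<le> r" "h w = 0"
      using IVT'[of h z 0 r] \<open>h z < 0\<close> hr zr by auto
    hence "w \<noteq> z" using \<open>h z < 0\<close> by auto
    thus False using pos[of w] w by auto
  qed
  have zp: "p < z"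
  proof -
    obtain d where d: "d > 0" "\<forall>t>0. t < d \<longrightarrow> h p > h (p + t)"
      using DERIV_neg_dec_right[OF der[of p] hp'] pr by auto
    define t where "t = min d (r - p) / 2"
    have t: "t > 0" "t < d" "p + t \<le> r" using d pr by (auto simp: t_def min_def field_simps)
    hence "p + t \<in> S" using d hp by (auto simp: S_def)
    thus ?thesis using ub[of "p+t"] t by auto
  qed
  have "h' z \<ge> 0"
  proof (rule ccontr)
    assume "\<not> h' z \<ge> 0"
    then obtain d where d: "d > 0" "\<forall>t>0. t < d \<longrightarrow> h z > h (z + t)"
      using DERIV_neg_dec_right[OF der[of z]] hz zr by force
    define t where "t = min d (r - z) / 2"
    have t: "t > 0" "t < d" "z + t \<le> r" using d zr by (auto simp: t_def min_def field_simps)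
    thus False using d pos[of "z+t"] hz0 by auto
  qed
  thus ?thesis using zp zr hz0 by auto
qed

lemma schw_alg:
  fixes a1 a2 a3 b1 b2 b3 :: real
  assumes "a1 \<noteq> 0" "b1 \<noteq> 0"
    and "a2 * b1^2 + a1 * b2 = 0"
  shows "a3 * b1^3 + 3 * a2 * b1 * b2 + a1 * b3
     = (a1 * b1) * ((a3 / a1 - 3/2 * (a2/a1)^2) * b1^2 + (b3 / b1 - 3/2*(b2/b1)^2))"
proof -
  have b2: "b2 = - a2 * b1^2 / a1" using assms by (simp add: field_simps)
  show ?thesis using assms(1,2) unfolding b2
    by (simp add: field_simps power2_eq_square power3_eq_cube)
qed


lemma deriv_unique_Icc:
  fixes f k :: "real \<Rightarrow> real"
  assumes x: "x \<in> {-1..1}" and df: "(f has_real_derivative D) (at x)"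
    and dk: "(k has_real_derivative E) (at x)" and eq: "\<forall>y\<in>{-1..1}. f y = k y"
  shows "D = E"
proof -
  have 1: "(f has_derivative (*) D) (at x within cbox (-1) 1)"
    using df by (simp add: has_field_derivative_def has_derivative_at_withinI)
  have 2: "(k has_derivative (*) E) (at x within cbox (-1) 1)"
    using dk by (simp add: has_field_derivative_def has_derivative_at_withinI)
  have 3: "(k has_derivative (*) D) (at x within cbox (-1) 1)"
    by (rule has_derivative_transform_within[OF 1, of 1]) (use x eq in auto)
  have "(*) D = (*) E"
    by (rule frechet_derivative_unique_within_closed_interval[OF _ _ 3 2]) (use x in auto)
  thus ?thesis by (metis mult.right_neutral)
qed

lemma DERIV_eqv: "(f has_real_derivative D) F \<Longrightarrow> D = E \<Longrightarrow> (f has_real_derivative E) F"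
  by simp



lemma alg3:
  fixes A1 A2 A3 B1 B2 B3 :: real
  shows "A3 * B1 * (B1 * B1) + (B2 * B1 + B2 * B1) * A2 + (A2 * B1 * B2 + B3 * A1)
     = A3 * B1 ^ 3 + 3 * A2 * B1 * B2 + A1 * B3"
  by (simp add: algebra_simps power3_eq_cube)

theorem mainTheorem6:
  fixes lam :: real and g :: "real \<Rightarrow> real" and c0 c1 q0 :: real
  assumes lam_range: "2.5029 \<le> lam" "lam < 2.503"
    and analytic: "real_analytic_near {-1..1} g"
    and maps_into: "\<forall>x\<in>{-1..1}. g x \<in> {-1..1}"
    and renorm: "\<forall>x\<in>{-1..1}. g x = - lam * g (g (- x / lam))"
    and fix_m1: "g (-1) = -1" "deriv g (-1) > 0"
    and fix_m1_unique: "\<forall>x\<in>{-1..1}. g x = x \<and> deriv g x > 0 \<longrightarrow> x = -1"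
    and g_1: "g 1 = -1"
    and c0_int: "-1 < c0" "c0 < 1"
    and c0_crit: "deriv g c0 = 0" "(deriv ^^ 2) g c0 \<noteq> 0"
    and c0_max: "\<forall>x\<in>{-1..1}. x \<noteq> c0 \<longrightarrow> g x < g c0"
    and even: "\<forall>x\<in>{-1..1}. g (- x) = g x"
    and c1_def: "c1 = g c0"
    and concave: "concave_on {-c1..c1} g"
    and c1_props: "g c1 = - c1 / lam" "deriv g c1 = - lam"
    and neg_schwarzian: "\<forall>x\<in>{-1..1}. deriv g x \<noteq> 0 \<longrightarrow> schwarzian g x < 0"
    and q0_fix: "q0 \<in> {-1..1}" "g q0 = q0" "deriv g q0 < 0"
  shows "deriv g (-1) = (deriv g q0)^2"
proof -
  obtain V where oV: "open V" and IV: "{-1..1} \<subseteq> V"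
    and sm: "\<And>n x. x \<in> V \<Longrightarrow> ((deriv^^n) g has_real_derivative (deriv^^(Suc n)) g x) (at x)"
    using analytic_smooth[OF analytic] by blast
  have d0: "(g has_real_derivative deriv g x) (at x)" if "x \<in> {-1..1}" for x
    using sm[of x 0] that IV by auto
  have d1: "(deriv g has_real_derivative (deriv^^2) g x) (at x)" if "x \<in> {-1..1}" for x
    using sm[of x 1] that IV by (auto simp: numeral_2_eq_2)
  have d2: "((deriv^^2) g has_real_derivative (deriv^^3) g x) (at x)" if "x \<in> {-1..1}" for x
    using sm[of x 2] that IV by (auto simp: numeral_3_eq_3)
  have lam1: "lam > 1" using lam_range by simp
  have c00: "c0 = 0"
  proof (rule ccontr)
    assume "c0 \<noteq> 0"
    hence "g (-c0) < g c0" using c0_max c0_int by auto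
    thus False using even c0_int by auto
  qed
  have c1g: "c1 = g 0" using c1_def c00 by simp
  have gmax: "g x \<le> c1" if "x \<in> {-1..1}" for x
    using c0_max that c1g c00 by (cases "x = 0") (auto simp: less_imp_le)
  have gmaxs: "g x < c1" if "x \<in> {-1..1}" "x \<noteq> 0" for x
    using c0_max that c1g c00 by auto
  have c1I: "c1 \<in> {-1..1}" using maps_into c1g by auto
  have c1pos: "c1 > 0"
  proof (rule ccontr)
    assume "\<not> c1 > 0"
    have "g c1 \<le> c1" using gmax c1I by auto
    moreover have "-c1/lam \<ge> 0" using lam1 \<open>\<not> c1 > 0\<close> by (intro divide_nonneg_pos) auto
    ultimately have "c1 \<ge> 0" using c1_props(1) by linarith
    hence "c1 = 0" using \<open>\<not> c1 > 0\<close> by auto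
    thus False using c1_props(2) c0_crit(1) c00 lam1 by auto
  qed
  have rn: "deriv g x = deriv g (g (-x/lam)) * deriv g (-x/lam)" if x: "x \<in> {-1..1}" for x
  proof -
    have yI: "-x/lam \<in> {-1..1}" using x lam1 by (auto simp: field_simps)
    have gyI: "g (-x/lam) \<in> {-1..1}" using maps_into yI by auto
    have dl: "((\<lambda>t. -t/lam) has_real_derivative -1/lam) (at x)"
      using lam1 by (auto intro!: derivative_eq_intros)
    have "((\<lambda>t. g (-t/lam)) has_real_derivative deriv g (-x/lam) * (-1/lam)) (at x)"
      by (rule DERIV_chain2[OF d0[OF yI] dl])
    hence "((\<lambda>t. g (g (-t/lam))) has_real_derivative deriv g (g (-x/lam)) * (deriv g (-x/lam) * (-1/lam))) (at x)"
      by (rule DERIV_chain2[where f=g and g="\<lambda>t. g (-t/lam)", OF d0[OF gyI]])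
    hence "((\<lambda>t. -lam * g (g (-t/lam))) has_real_derivative -lam * (deriv g (g (-x/lam)) * (deriv g (-x/lam) * (-1/lam)))) (at x)"
      by (rule DERIV_cmult)
    hence R: "((\<lambda>t. -lam * g (g (-t/lam))) has_real_derivative deriv g (g (-x/lam)) * deriv g (-x/lam)) (at x)"
      using lam1 by simp
    show ?thesis by (rule deriv_unique_Icc[OF x d0[OF x] R]) (use renorm in auto)
  qed
  define a where "a = 1/lam"
  have a: "0 < a" "a < 1" using lam1 by (auto simp: a_def)
  define u where "u = g a"
  have aI: "a \<in> {-1..1}" using a by auto
  have uI: "u \<in> {-1..1}" using maps_into aI u_def by auto
  have gu: "g u = a"
  proof -
    have "g (-1) = - lam * g (g (- (-1) / lam))" using renorm by auto
    hence "-1 = - lam * g (g (1/lam))" using fix_m1(1) by simp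
    thus ?thesis using lam1 unfolding u_def a_def by (simp add: field_simps)
  qed
  have ac1: "a \<le> c1" using gmax[OF uI] gu by simp
  have rn1: "deriv g (-1) = deriv g u * deriv g a"
    using rn[of "-1"] unfolding u_def a_def by simp
  have dec: "g y < g x" if "0 \<le> x" "x < y" "y \<le> c1" for x y
  proof -
    define t where "t = x / y"
    have t: "0 \<le> t" "t < 1" using that by (auto simp: t_def)
    have "(1 - t) * g 0 + t * g y \<le> g ((1 - t) *\<^sub>R 0 + t *\<^sub>R y)"
      by (rule concave_onD[OF concave]) (use t that c1pos in auto)
    also have "(1 - t) *\<^sub>R 0 + t *\<^sub>R y = x" using that by (simp add: t_def)
    finally have "(1 - t) * c1 + t * g y \<le> g x" using c1g by simp
    moreover have "g y < c1" using gmaxs[of y] that c1I by auto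
    moreover have "(1-t)*(c1 - g y) > 0" using t \<open>g y < c1\<close> by simp
    moreover have "(1 - t) * c1 + t * g y = g y + (1-t)*(c1 - g y)" by (simp add: algebra_simps)
    ultimately show ?thesis by linarith
  qed
  have decle: "g y \<le> g x" if "0 \<le> x" "x \<le> y" "y \<le> c1" for x y
    using dec[of x y] that by (cases "x = y") auto
  have gneg: "deriv g x < 0" if "0 < x" "x \<le> c1" for x
  proof (cases "x = c1")
    case True thus ?thesis using c1_props lam1 by simp
  next
    case False
    have xI: "x \<in> {-1..1}" using that c1I by auto
    have "convex_on {-c1..c1} (\<lambda>x. - g x)" using concave by (simp add: concave_on_def)
    moreover have "((\<lambda>x. - g x) has_real_derivative - deriv g x) (at x within {-c1..c1})"
      using DERIV_minus[OF d0[OF xI]] by (simp add: has_field_derivative_at_within)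
    ultimately have "(- g 0) - (- g x) \<ge> (- deriv g x) * (0 - x)"
      by (intro convex_on_imp_above_tangent) (use that False c1pos in auto)
    moreover have "g x < c1" using gmaxs[OF xI] that by auto
    ultimately have "deriv g x * x < 0" using c1g by (simp add: algebra_simps)
    thus ?thesis using that by (simp add: mult_less_0_iff)
  qed
  have hpos: "g x > x" if "-c1 \<le> x" "x \<le> 0" for x
  proof -
    define t where "t = 1 + x / c1"
    have t: "0 \<le> t" "t \<le> 1" using that c1pos by (auto simp: t_def field_simps)
    have "(1 - t) * g (-c1) + t * g 0 \<le> g ((1 - t) *\<^sub>R (-c1) + t *\<^sub>R 0)"
      by (rule concave_onD[OF concave]) (use t that c1pos in auto)
    also have "(1 - t) *\<^sub>R (-c1) + t *\<^sub>R 0 = x" using c1pos by (simp add: t_def field_simps)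
    finally have 1: "(1 - t) * (- c1/lam) + t * c1 \<le> g x"
      using c1g even c1I c1_props(1) by simp
    have x: "x = -(1-t) * c1" using c1pos by (simp add: t_def field_simps)
    have "(1 - t) * (- c1/lam) + t * c1 > x"
    proof -
      have "(1 - t) * (- c1/lam) + t * c1 - x = (1-t) * c1 * (1 - 1/lam) + t * c1"
        unfolding x using lam1 by (simp add: field_simps)
      moreover have "(1-t) * c1 * (1 - 1/lam) + t * c1 > 0"
      proof (cases "t = 0")
        case True thus ?thesis using c1pos lam1 by simp
      next
        case False
        have "(1-t) * c1 * (1 - 1/lam) \<ge> 0" using t c1pos lam1 by simp
        moreover have "t * c1 > 0" using False t c1pos by simp
        ultimately show ?thesis by linarith
      qed
      ultimately show ?thesis by simp
    qed
    thus ?thesis using 1 by simp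
  qed
  have c1lt1: "c1 < 1"
  proof (rule ccontr)
    assume "\<not> c1 < 1"
    hence "c1 = 1" using c1I by auto
    thus False using hpos[of "-1"] fix_m1 by simp
  qed
  have m1: "deriv g (-1) \<ge> 1"
  proof (rule ccontr)
    assume "\<not> deriv g (-1) \<ge> 1"
    have "\<exists>z. -1 < z \<and> z < -c1 \<and> g z - z = 0 \<and> deriv g z - 1 \<ge> 0"
      apply (rule crossing[where h="\<lambda>x. g x - x" and h'="\<lambda>x. deriv g x - 1"])
      using c1lt1 fix_m1 hpos[of "-c1"] c1pos \<open>\<not> deriv g (-1) \<ge> 1\<close>
      by (auto intro!: derivative_eq_intros d0)
    then obtain z where z: "-1 < z" "z < -c1" "g z = z" "deriv g z \<ge> 1" by auto
    thus False using fix_m1_unique c1pos by auto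
  qed
  have q0pos: "0 < q0" "q0 \<le> c1"
  proof -
    show "q0 \<le> c1" using gmax[OF q0_fix(1)] q0_fix by simp
    show "0 < q0"
    proof (rule ccontr)
      assume "\<not> 0 < q0"
      have "q0 < -c1" using hpos[of q0] q0_fix \<open>\<not> 0 < q0\<close> by force
      have "q0 \<noteq> -1" using q0_fix fix_m1 by auto
      hence "-1 < q0" using q0_fix by auto
      have "\<exists>z. q0 < z \<and> z < -c1 \<and> g z - z = 0 \<and> deriv g z - 1 \<ge> 0"
        apply (rule crossing[where h="\<lambda>x. g x - x" and h'="\<lambda>x. deriv g x - 1"])
        using \<open>q0 < -c1\<close> \<open>-1 < q0\<close> q0_fix hpos[of "-c1"] c1pos c1lt1
        by (auto intro!: derivative_eq_intros d0)
      then obtain z where z: "q0 < z" "z < -c1" "g z = z" "deriv g z \<ge> 1" by auto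
      thus False using fix_m1_unique c1pos \<open>-1 < q0\<close> by auto
    qed
  qed
  have q0a: "q0 \<le> a"
  proof (rule ccontr)
    assume "\<not> q0 \<le> a" hence aq: "a < q0" by simp
    have uq: "q0 < u" using dec[of a q0] a aq q0pos q0_fix unfolding u_def by auto
    have uc: "u \<le> c1" using gmax[OF aI] by (simp add: u_def)
    have KI: "x \<in> {-1..1}" "0 < x" "x \<le> c1" if "x \<in> {a..u}" for x
      using that a uc c1I by auto
    have gK: "g x \<in> {a..u}" if "x \<in> {a..u}" for x
      using decle[of a x] decle[of x u] that a uc gu unfolding u_def by auto
    define F1 where "F1 = (\<lambda>x. deriv g (g x) * deriv g x)"
    define F2 where "F2 = (\<lambda>x. (deriv^^2) g (g x) * (deriv g x * deriv g x) + deriv g (g x) * (deriv^^2) g x)"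
    define F3 where "F3 = (\<lambda>x. (deriv^^3) g (g x) * deriv g x ^ 3 + 3 * (deriv^^2) g (g x) * deriv g x * (deriv^^2) g x
                        + deriv g (g x) * (deriv^^3) g x)"
    have dF0: "((\<lambda>x. g (g x)) has_real_derivative F1 x) (at x)" if "x \<in> {a..u}" for x
      unfolding F1_def
      by (rule DERIV_chain2[where f=g and g=g, OF d0[OF KI(1)[OF gK[OF that]]] d0[OF KI(1)[OF that]]])
    have dF1: "(F1 has_real_derivative F2 x) (at x)" if "x \<in> {a..u}" for x
    proof -
      have xI: "x \<in> {-1..1}" and gxI: "g x \<in> {-1..1}" using KI gK that by auto
      show ?thesis unfolding F1_def
        by (rule DERIV_eqv[OF DERIV_mult[OF DERIV_chain2[where f="deriv g" and g=g, OF d1[OF gxI] d0[OF xI]] d1[OF xI]]])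
           (simp add: F2_def algebra_simps)
    qed
    have dF2: "(F2 has_real_derivative F3 x) (at x)" if "x \<in> {a..u}" for x
    proof -
      have xI: "x \<in> {-1..1}" and gxI: "g x \<in> {-1..1}" using KI gK that by auto
      show ?thesis unfolding F2_def
        apply (rule DERIV_eqv[OF DERIV_add[OF DERIV_mult[OF DERIV_chain2[where f="(deriv^^2) g" and g=g, OF d2[OF gxI] d0[OF xI]]
                  DERIV_mult[OF d1[OF xI] d1[OF xI]]]
                  DERIV_mult[OF DERIV_chain2[where f="deriv g" and g=g, OF d1[OF gxI] d0[OF xI]] d2[OF xI]]]])
           apply (unfold F3_def) by (fact alg3)
    qed
    have F1pos: "F1 x > 0" if "x \<in> {a..u}" for x
      using gneg[OF KI(2,3)[OF that]] gneg[OF KI(2,3)[OF gK[OF that]]] unfolding F1_def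
      by (simp add: mult_neg_neg)
    have cF1: "continuous_on {a..u} F1"
      using dF1 by (meson DERIV_continuous continuous_at_imp_continuous_on)
    have F1a: "F1 a = deriv g (-1)" unfolding F1_def rn1 u_def by simp
    have F1u: "F1 u = deriv g (-1)" unfolding F1_def rn1 gu by simp
    obtain xi where xi: "a < xi" "xi < q0" "F1 xi = 1"
    proof -
      have "\<exists>z. a < z \<and> z < q0 \<and> (\<lambda>v. (F1 z - 1) * v) = (\<lambda>v. 0)"
      proof (rule Rolle_deriv[where f="\<lambda>x. g (g x) - x"])
        show "a < q0" by fact
        show "g (g a) - a = g (g q0) - q0" using gu q0_fix unfolding u_def by simp
        show "continuous_on {a..q0} (\<lambda>x. g (g x) - x)"
        proof (rule continuous_on_diff[OF _ continuous_on_id])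
          show "continuous_on {a..q0} (\<lambda>x. g (g x))"
          proof (rule continuous_at_imp_continuous_on, rule ballI)
            fix x assume "x \<in> {a..q0}"
            hence "x \<in> {a..u}" using uq by auto
            thus "isCont (\<lambda>x. g (g x)) x" by (rule DERIV_isCont[OF dF0])
          qed
        qed
        fix x assume "a < x" "x < q0"
        hence "x \<in> {a..u}" using uq by auto
        from DERIV_diff[OF dF0[OF this] DERIV_ident]
        show "((\<lambda>x. g (g x) - x) has_derivative (\<lambda>v. (F1 x - 1) * v)) (at x)"
          by (simp add: has_field_derivative_def)
      qed
      then obtain z where "a < z" "z < q0" "(\<lambda>v. (F1 z - 1) * v) = (\<lambda>v. 0)" by auto
      moreover from fun_cong[OF this(3), of 1] have "F1 z = 1" by simp
      ultimately show ?thesis using that by auto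
    qed
    obtain c where c: "c \<in> {a..u}" "\<forall>y\<in>{a..u}. F1 c \<le> F1 y"
      using continuous_attains_inf[OF compact_Icc _ cF1] uq aq by auto
    obtain c' where c': "a < c'" "c' < u" "\<forall>y\<in>{a..u}. F1 c' \<le> F1 y"
    proof (cases "a < c \<and> c < u")
      case True thus ?thesis using that c by auto
    next
      case False
      hence "c = a \<or> c = u" using c by auto
      hence "F1 c = deriv g (-1)" using F1a F1u by auto
      moreover have "F1 c \<le> F1 xi" using c(2) xi uq by (meson atLeastAtMost_iff less_imp_le order.strict_trans)
      ultimately have "F1 xi = F1 c" using xi m1 by linarith
      thus ?thesis using that[of xi] xi uq c(2) by auto
    qed
    have cK: "c' \<in> {a..u}" using c' by auto
    have F2c: "F2 c' = 0"
    proof (rule DERIV_local_min[OF dF1[OF cK]])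
      show "0 < min (c' - a) (u - c')" using c' by auto
      show "\<forall>y. \<bar>c' - y\<bar> < min (c' - a) (u - c') \<longrightarrow> F1 c' \<le> F1 y"
      proof (intro allI impI)
        fix y assume "\<bar>c' - y\<bar> < min (c' - a) (u - c')"
        hence "y \<in> {a..u}" by (auto simp: abs_less_iff)
        thus "F1 c' \<le> F1 y" using c'(3) by blast
      qed
    qed
    have F3c: "F3 c' < 0"
    proof -
      have xI: "c' \<in> {-1..1}" and gxI: "g c' \<in> {-1..1}" using KI gK cK by auto
      have n1: "deriv g c' \<noteq> 0" using gneg[OF KI(2,3)[OF cK]] by simp
      have n2: "deriv g (g c') \<noteq> 0" using gneg[OF KI(2,3)[OF gK[OF cK]]] by simp
      have s1: "schwarzian g c' < 0" using neg_schwarzian xI n1 by auto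
      have s2: "schwarzian g (g c') < 0" using neg_schwarzian gxI n2 by auto
      have e: "F3 c' = F1 c' * (schwarzian g (g c') * (deriv g c')^2 + schwarzian g c')"
        unfolding F3_def F1_def schwarzian_def
        by (rule schw_alg[OF n2 n1]) (use F2c in \<open>simp add: F2_def power2_eq_square\<close>)
      have "schwarzian g (g c') * (deriv g c')^2 + schwarzian g c' < 0"
        using s1 s2 n1 by (simp add: add_neg_neg mult_neg_pos)
      thus ?thesis using e F1pos[OF cK] by (simp add: mult_pos_neg)
    qed
    obtain d where d: "d > 0" "\<forall>h>0. h < d \<longrightarrow> F2 c' > F2 (c' + h)"
      using DERIV_neg_dec_right[OF dF2[OF cK] F3c] by auto
    define t where "t = min d (u - c') / 2"
    have t: "t > 0" "t < d" "c' + t \<le> u" using d c' by (auto simp: t_def min_def field_simps)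
    have dneg: "\<exists>y. DERIV F1 x :> y \<and> y < 0" if x: "c' < x" "x < c' + t" for x
    proof -
      have "x \<in> {a..u}" using x t c' by auto
      moreover have "F2 x < 0" using d(2)[rule_format, of "x - c'"] x t F2c by auto
      ultimately show ?thesis using dF1 by blast
    qed
    have ct: "continuous_on {c'..c'+t} F1" using cF1 t c' by (auto intro: continuous_on_subset)
    have "F1 c' > F1 (c' + t)"
      using DERIV_neg_imp_decreasing_open[of c' "c'+t" F1, OF _ dneg ct] t by auto
    moreover have "c' + t \<in> {a..u}" using t c' by auto
    moreover have "F1 c' \<le> F1 (c' + t)" using c'(3) \<open>c' + t \<in> {a..u}\<close> by blast
    ultimately show False by linarith
  qed
  define x0 where "x0 = - lam * q0"
  have "lam * q0 > 0" using q0pos lam1 by simp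
  moreover have "lam * q0 \<le> 1" using q0a lam1 unfolding a_def by (simp add: field_simps)
  ultimately have x0I: "x0 \<in> {-1..1}" unfolding x0_def by auto
  have x0q: "- x0 / lam = q0" using lam1 by (simp add: x0_def)
  have gx0: "g x0 = x0" using renorm x0I x0q q0_fix by (auto simp: x0_def)
  have dx0: "deriv g x0 = (deriv g q0)^2" using rn[OF x0I] x0q q0_fix by (simp add: power2_eq_square)
  have "deriv g x0 > 0" using dx0 q0_fix by simp
  hence "x0 = -1" using fix_m1_unique x0I gx0 by auto
  thus ?thesis using dx0 by simp
qed


end
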